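(* Let $q$ be a prime power, $s,\ell$ positive integers, $\alpha,\beta\in\{1,-1\}\subseteq\mathbb{F}_q$, $r$ the multiplicative order of $\beta$, and assume $q\equiv 1\pmod{r\ell}$. Let $\omega\in\mathbb{F}_q$ be a primitive $r\ell$-th root of unity with $\omega^\ell=\beta$, and $\eta_k(y)=\prod_{j\ne k,\,0\le j\le \ell-1}\frac{y-\omega^{1+jr}}{\omega^{1+kr}-\omega^{1+jr}}$ for $0\le k\le\ell-1$. Let $\mathcal{C}$ be an ideal of $\mathcal{R}=\mathbb{F}_q[x,y]/\langle x^s-\alpha,y^\ell-\beta\rangle$; for each $j$ let $p_j(x)$ be the monic divisor of $x^s-\alpha$ generating $I_j=\{f(x)\in\mathbb{F}_q[x]/\langle x^s-\alpha\rangle:\eta_j(y)f(x)\in\mathcal{C}\}$, $a_j=\deg p_j(x)$, and $p_j'(x)=(x^s-\alpha)/p_j(x)$. Then $\mathcal{C}$ is self-dual if and only if (i) $s\ell=2(a_0+a_1+\cdots+a_{\ell-1})$, and (ii) for every $k$, $0\le k\le \ell-1$, there exist nonzero polynomials $t_k(x),t_k'(x)\in\mathbb{F}_q[x]/\langle x^s-\alpha\rangle$ such that, in $\mathbb{F}_q[x]/\langle x^s-\alpha\rangle$, if $\beta=1$: $p_k'^*(x)=t_k(x)p_{\ell-2-k}(x)$ and $p_k(x)=t_k'(x)p'^*_{\ell-2-k}(x)$; if $\beta=-1$: $p_k'^*(x)=t_k(x)p_{\ell-1-k}(x)$ and $p_k(x)=t_k'(x)p'^*_{\ell-1-k}(x)$;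 where subscripts are read modulo $\ell$.
   Context: Elements of $\mathcal{R}$ are identified with vectors $(c_{i,j})$ of length $s\ell$ via the coefficients of $x^iy^j$ ($0\le i\le s-1$, $0\le j\le \ell-1$); ideals of $\mathcal{R}$ are two-dimensional $(\alpha,\beta)$-constacyclic codes. $\mathcal{C}^\perp$ denotes the Euclidean dual, and $\mathcal{C}$ is self-dual if $\mathcal{C}=\mathcal{C}^\perp$. For a nonzero polynomial $f$ of degree $k$, $f^*(x)=x^kf(1/x)$. *)

theory Defs
  imports "HOL-Computational_Algebra.Polynomial"
begin

text \<open>Elements of R = F_q[x,y]/(x^s - alpha, y^l - beta) are coefficient arrays
  c i j (coefficient of x^i y^j), zero outside 0 <= i < s, 0 <= j < l.\<close>

definition Rsp :: "nat \<Rightarrow> nat \<Rightarrow> (nat \<Rightarrow> nat \<Rightarrow> 'a::zero) set" where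
  "Rsp s l = {c. \<forall>i j. (s \<le> i \<or> l \<le> j) \<longrightarrow> c i j = 0}"

text \<open>Multiplication in R: x^s = alpha, y^l = beta.\<close>
definition rmul :: "nat \<Rightarrow> nat \<Rightarrow> 'a::comm_ring_1 \<Rightarrow> 'a \<Rightarrow>
    (nat \<Rightarrow> nat \<Rightarrow> 'a) \<Rightarrow> (nat \<Rightarrow> nat \<Rightarrow> 'a) \<Rightarrow> (nat \<Rightarrow> nat \<Rightarrow> 'a)" where
  "rmul s l \<alpha> \<beta> c d = (\<lambda>i j. if i < s \<and> j < l then
     (\<Sum>i1<s. \<Sum>j1<l. \<Sum>i2<s. \<Sum>j2<l.
        (if (i1 + i2) mod s = i \<and> (j1 + j2) mod l = j
         then \<alpha> ^ ((i1 + i2) div s) * \<beta> ^ ((j1 + j2) div l) * c i1 j1 * d i2 j2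
         else 0))
     else 0)"

definition R_ideal :: "nat \<Rightarrow> nat \<Rightarrow> 'a::comm_ring_1 \<Rightarrow> 'a \<Rightarrow> (nat \<Rightarrow> nat \<Rightarrow> 'a) set \<Rightarrow> bool" where
  "R_ideal s l \<alpha> \<beta> C \<longleftrightarrow> C \<subseteq> Rsp s l \<and> (\<lambda>i j. 0) \<in> C
     \<and> (\<forall>c\<in>C. \<forall>d\<in>C. (\<lambda>i j. c i j + d i j) \<in> C)
     \<and> (\<forall>c\<in>C. (\<lambda>i j. - c i j) \<in> C)
     \<and> (\<forall>c\<in>C. \<forall>a\<in>Rsp s l. rmul s l \<alpha> \<beta> a c \<in> C)"

definition R_dual :: "nat \<Rightarrow> nat \<Rightarrow> (nat \<Rightarrow> nat \<Rightarrow> 'a::comm_ring_1) set \<Rightarrow> (nat \<Rightarrow> nat \<Rightarrow> 'a) set" where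
  "R_dual s l C = {v \<in> Rsp s l. \<forall>c\<in>C. (\<Sum>i<s. \<Sum>j<l. c i j * v i j) = 0}"

definition self_dual :: "nat \<Rightarrow> nat \<Rightarrow> (nat \<Rightarrow> nat \<Rightarrow> 'a::comm_ring_1) set \<Rightarrow> bool" where
  "self_dual s l C \<longleftrightarrow> C = R_dual s l C"

text \<open>The element g(y) f(x) of R, for deg f < s and deg g < l.\<close>
definition prodR :: "nat \<Rightarrow> nat \<Rightarrow> 'a::comm_ring_1 poly \<Rightarrow> 'a poly \<Rightarrow> (nat \<Rightarrow> nat \<Rightarrow> 'a)" where
  "prodR s l f g = (\<lambda>i j. if i < s \<and> j < l then coeff f i * coeff g j else 0)"

definition eta :: "'a::field \<Rightarrow> nat \<Rightarrow> nat \<Rightarrow> nat \<Rightarrow> 'a poly" where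
  "eta \<omega> r l k = (\<Prod>j\<in>{0..<l} - {k}.
      smult (inverse (\<omega> ^ (1 + k * r) - \<omega> ^ (1 + j * r))) [:- (\<omega> ^ (1 + j * r)), 1:])"

definition xpoly :: "nat \<Rightarrow> 'a::comm_ring_1 \<Rightarrow> 'a poly" where
  "xpoly s \<alpha> = monom 1 s - [:\<alpha>:]"

text \<open>I_j = { f in F_q[x]/(x^s - alpha) : eta_j(y) f(x) in C }, with F_q[x]/(x^s-alpha)
  represented by polynomials of degree < s.\<close>
definition Iset :: "nat \<Rightarrow> nat \<Rightarrow> 'a::field \<Rightarrow> nat \<Rightarrow> (nat \<Rightarrow> nat \<Rightarrow> 'a) set \<Rightarrow> nat \<Rightarrow> 'a poly set" where
  "Iset s l \<omega> r C j = {f. degree f < s \<and> prodR s l f (eta \<omega> r l j) \<in> C}"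

end

theory Submission
  imports Defs
begin


definition Pset :: "nat \<Rightarrow> 'a::field \<Rightarrow> 'a poly \<Rightarrow> 'a poly set" where
  "Pset s \<alpha> p = {(g * p) mod xpoly s \<alpha> | g. True}"
definition Bf :: "nat \<Rightarrow> 'a::field poly \<Rightarrow> 'a poly \<Rightarrow> 'a" where
  "Bf s f w = (\<Sum>i<s. coeff f i * coeff w i)"
definition Perp :: "nat \<Rightarrow> 'a::field poly set \<Rightarrow> 'a poly set" where
  "Perp s S = {w. degree w < s \<and> (\<forall>f\<in>S. Bf s f w = 0)}"
definition revs :: "nat \<Rightarrow> 'a::field poly \<Rightarrow> 'a poly" where
  "revs s w = (\<Sum>i<s. monom (coeff w i) (s - 1 - i))"

lemma coeff_const': "coeff [:a:] k = (if k = 0 then a else 0)"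
  by (simp add: coeff_pCons split: nat.split)

lemma coeff_xpoly: "coeff (xpoly s \<alpha>) k = (if k = s then 1 else 0) - (if k = 0 then \<alpha> else 0)"
  by (simp add: xpoly_def coeff_monom coeff_const')

lemma degree_xpoly: "0 < s \<Longrightarrow> degree (xpoly s (\<alpha>::'a::field)) = s"
proof -
  assume s: "0 < s"
  have "degree (xpoly s \<alpha>) \<le> s" unfolding xpoly_def
    by (rule degree_diff_le) (auto simp: degree_monom_le)
  moreover have "coeff (xpoly s \<alpha>) s \<noteq> 0" using s by (simp add: coeff_xpoly)
  ultimately show ?thesis by (simp add: le_degree le_antisym)
qed

lemma xpoly_nz: "0 < s \<Longrightarrow> xpoly s (\<alpha>::'a::field) \<noteq> 0"
  using degree_xpoly[of s \<alpha>] by (metis degree_0 less_irrefl)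

lemma degree_mod_xpoly: "0 < s \<Longrightarrow> degree (f mod xpoly s (\<alpha>::'a::field)) < s"
  using degree_mod_less[OF xpoly_nz[of s \<alpha>], of f] degree_xpoly[of s \<alpha>] by auto

lemma coeff_revs: "0 < s \<Longrightarrow> coeff (revs s w) n = (if n < s then coeff w (s - 1 - n) else 0)"
proof -
  assume s: "0 < s"
  have "coeff (revs s w) n = (\<Sum>i<s. if s - 1 - i = n then coeff w i else 0)"
    by (simp add: revs_def coeff_sum coeff_monom)
  also have "\<dots> = (\<Sum>i<s. if i = s - 1 - n \<and> n < s then coeff w i else 0)"
    by (rule sum.cong) auto
  also have "\<dots> = (if n < s then coeff w (s - 1 - n) else 0)"
    using s by (cases "n < s") auto
  finally show ?thesis .
qed

lemma degree_revs: "0 < s \<Longrightarrow> degree (revs s w) < s"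
  by (rule degree_lessI) (auto simp: coeff_revs)

lemma revs_revs: "0 < s \<Longrightarrow> degree w < s \<Longrightarrow> revs s (revs s w) = w"
  by (rule poly_eqI) (auto simp: coeff_revs intro: coeff_eq_0)

lemma revs_reflect: "0 < s \<Longrightarrow> degree w < s \<Longrightarrow>
    revs s w = monom 1 (s - 1 - degree w) * reflect_poly w"
proof (rule poly_eqI)
  fix n assume s: "0 < s" and d: "degree w < s"
  show "coeff (revs s w) n = coeff (monom 1 (s - 1 - degree w) * reflect_poly w) n"
    using s d by (auto simp: coeff_revs coeff_monom_mult coeff_reflect_poly intro: coeff_eq_0)
qed

lemma Bf_coeff: "0 < s \<Longrightarrow> Bf s f w = coeff (f * revs s w) (s - 1)"
proof -
  assume s: "0 < s"
  have "coeff (f * revs s w) (s - 1) = (\<Sum>i\<le>s - 1. coeff f i * coeff (revs s w) (s - 1 - i))"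
    by (simp add: coeff_mult)
  also have "\<dots> = (\<Sum>i<s. coeff f i * coeff w i)"
  proof -
    have "{..s - 1} = {..<s}" using s by auto
    then show ?thesis using s by (auto simp: coeff_revs intro!: sum.cong)
  qed
  finally show ?thesis by (simp add: Bf_def)
qed

lemma coeff_xpoly_mult: "0 < s \<Longrightarrow> degree Q < s - 1 \<Longrightarrow> coeff (xpoly s \<alpha> * Q) (s - 1) = 0"
proof -
  assume s: "0 < s" and d: "degree Q < s - 1"
  have "xpoly s \<alpha> * Q = monom 1 s * Q - smult \<alpha> Q" by (simp add: xpoly_def algebra_simps)
  then show ?thesis using s d by (simp add: coeff_monom_mult coeff_eq_0)
qed

lemma coeff_mod_top:
  assumes s: "0 < s" and dF: "degree F \<le> 2 * s - 2"
  shows "coeff (F mod xpoly s (\<alpha>::'a::field)) (s - 1) = coeff F (s - 1)"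
proof -
  define X where "X = xpoly s \<alpha>"
  define Q where "Q = F div X"
  have F: "F = X * Q + F mod X" by (simp add: Q_def)
  show ?thesis
  proof (cases "Q = 0")
    case True then show ?thesis using F X_def by (metis add_0 mult_zero_right)
  next
    case False
    have XQ: "X * Q = F - F mod X" using F by (metis add_diff_cancel_right')
    have "degree (F mod X) < s" using degree_mod_xpoly[OF s] X_def by auto
    then have "degree (X * Q) \<le> 2 * s - 2" unfolding XQ using dF
      by (intro degree_diff_le) auto
    moreover have "degree (X * Q) = s + degree Q"
      using False xpoly_nz[OF s, of \<alpha>] degree_xpoly[OF s, of \<alpha>] X_def by (simp add: degree_mult_eq)
    ultimately have "degree Q < s - 1" using s by arith
    then have "coeff (X * Q) (s - 1) = 0" using coeff_xpoly_mult[OF s] X_def by blast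
    then show ?thesis using F X_def by (metis add_0 coeff_add)
  qed
qed

lemma Pset_dvd: "p dvd xpoly s \<alpha> \<Longrightarrow> f \<in> Pset s \<alpha> p \<Longrightarrow> p dvd f"
  unfolding Pset_def by (auto intro!: dvd_mod)

lemma Pset_degree: "0 < s \<Longrightarrow> f \<in> Pset s \<alpha> p \<Longrightarrow> degree f < s"
  unfolding Pset_def using degree_mod_xpoly by blast

lemma reflect_xpoly:
  assumes s: "0 < s" and a: "\<alpha> \<in> {1, -1::'a::field}"
  shows "reflect_poly (xpoly s \<alpha>) = smult (- \<alpha>) (xpoly s \<alpha>)"
proof (rule poly_eqI)
  fix n
  have aa: "\<alpha> * \<alpha> = 1" using a by auto
  show "coeff (reflect_poly (xpoly s \<alpha>)) n = coeff (smult (- \<alpha>) (xpoly s \<alpha>)) n"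
    using s aa by (auto simp: coeff_reflect_poly degree_xpoly coeff_xpoly)
qed

lemma orth:
  fixes p :: "'a::field poly"
  assumes s: "0 < s" and a: "\<alpha> \<in> {1, -1}" and p0: "p \<noteq> 0" and pd: "p dvd xpoly s \<alpha>"
  shows "Perp s (Pset s \<alpha> p) = Pset s \<alpha> (reflect_poly (xpoly s \<alpha> div p))"
proof -
  define X where "X = xpoly s \<alpha>"
  define p' where "p' = X div p"
  define h where "h = reflect_poly p'"
  have Xnz: "X \<noteq> 0" using xpoly_nz[OF s] X_def by auto
  have dX: "degree X = s" using degree_xpoly[OF s] X_def by auto
  have Xpp: "X = p * p'" using pd X_def p'_def by simp
  have an: "\<alpha> \<noteq> 0" using a by auto
  have c0: "coeff p' 0 \<noteq> 0"
  proof -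
    have "coeff X 0 = coeff p 0 * coeff p' 0" using Xpp coeff_mult_0 by metis
    moreover have "coeff X 0 = - \<alpha>" using s X_def by (simp add: coeff_xpoly)
    ultimately show ?thesis using an by auto
  qed
  have rh: "reflect_poly h = p'" using c0 h_def by simp
  have hX: "h dvd X"
  proof -
    have "reflect_poly X = h * reflect_poly p" using Xpp h_def by (simp add: reflect_poly_mult mult.commute)
    then have "h dvd smult (- \<alpha>) X" using reflect_xpoly[OF s a] X_def by (metis dvd_triv_left)
    then show ?thesis using an by (simp add: dvd_smult_cancel)
  qed
  have pX: "p dvd X" using pd X_def by simp
  have modid: "w mod X = w" if "degree w < s" for w
    using that dX by (simp add: mod_poly_less)
  show ?thesis
  proof (intro set_eqI iffI)
    fix w assume w: "w \<in> Perp s (Pset s \<alpha> p)"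
    then have dw: "degree w < s" and ort: "\<And>f. f \<in> Pset s \<alpha> p \<Longrightarrow> Bf s f w = 0"
      by (auto simp: Perp_def)
    define u0 where "u0 = (p * revs s w) mod X"
    have du0: "degree u0 < s" using degree_mod_xpoly[OF s] u0_def X_def by auto
    have cu: "coeff u0 (s - 1 - j) = 0" if j: "j < s" for j
    proof -
      define f where "f = (monom 1 j * p) mod X"
      have fP: "f \<in> Pset s \<alpha> p" unfolding Pset_def f_def X_def by auto
      have df: "degree f < s" using Pset_degree[OF s fP] .
      have dr: "degree (revs s w) < s" using degree_revs[OF s] .
      have "0 = Bf s f w" using ort[OF fP] by simp
      also have "\<dots> = coeff (f * revs s w) (s - 1)" by (rule Bf_coeff[OF s])
      also have "\<dots> = coeff ((f * revs s w) mod X) (s - 1)"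
      proof -
        have "degree (f * revs s w) \<le> 2 * s - 2"
          using degree_mult_le[of f "revs s w"] df dr by arith
        then show ?thesis using coeff_mod_top[OF s] X_def by metis
      qed
      also have "(f * revs s w) mod X = (monom 1 j * u0) mod X"
        unfolding f_def u0_def by (simp add: mod_mult_left_eq mod_mult_right_eq mult.assoc)
      also have "coeff ((monom 1 j * u0) mod X) (s - 1) = coeff (monom 1 j * u0) (s - 1)"
      proof -
        have "degree (monom 1 j * u0) \<le> 2 * s - 2"
          using degree_mult_le[of "monom 1 j" u0] degree_monom_le[of "1::'a" j] du0 j by arith
        then show ?thesis using coeff_mod_top[OF s] X_def by metis
      qed
      also have "\<dots> = coeff u0 (s - 1 - j)" using j by (simp add: coeff_monom_mult)
      finally show ?thesis by simp
    qed
    have "u0 = 0"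
    proof (rule poly_eqI)
      fix n show "coeff u0 n = coeff 0 n"
      proof (cases "n < s")
        case True
        then have "n = s - 1 - (s - 1 - n)" by arith
        then show ?thesis using cu[of "s - 1 - n"] True s by (metis coeff_0 diff_less zero_less_one
              less_imp_diff_less)
      next
        case False then show ?thesis using du0 by (simp add: coeff_eq_0)
      qed
    qed
    then have "p * p' dvd p * revs s w" using Xpp u0_def by (simp add: mod_eq_0_iff_dvd)
    then have "p' dvd revs s w" using p0 by simp
    then obtain q where q: "revs s w = p' * q" by (auto elim: dvdE)
    show "w \<in> Pset s \<alpha> (reflect_poly (xpoly s \<alpha> div p))"
    proof (cases "w = 0")
      case True then show ?thesis unfolding Pset_def by (auto intro!: exI[of _ 0])
    next
      case False
      have "w = revs s (revs s w)" using revs_revs[OF s dw] by simp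
      also have "\<dots> = monom 1 (s - 1 - degree (revs s w)) * reflect_poly (p' * q)"
        using revs_reflect[OF s degree_revs[OF s, of w]] unfolding q by simp
      finally have "w = h * (monom 1 (s - 1 - degree (revs s w)) * reflect_poly q)"
        by (simp add: reflect_poly_mult h_def algebra_simps)
      then have "h dvd w" by (metis dvd_triv_left)
      then obtain z where z: "w = h * z" by (auto elim: dvdE)
      have "w = (z * h) mod X" using modid[OF dw] z by (simp add: mult.commute)
      then show ?thesis unfolding Pset_def h_def p'_def X_def by auto
    qed
  next
    fix w assume w: "w \<in> Pset s \<alpha> (reflect_poly (xpoly s \<alpha> div p))"
    then have wP: "w \<in> Pset s \<alpha> h" by (simp add: h_def p'_def X_def)
    have dw: "degree w < s" using Pset_degree[OF s wP] .
    have "h dvd w" using Pset_dvd[OF _ wP] hX X_def by simp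
    then obtain z where z: "w = h * z" by (auto elim: dvdE)
    have "Bf s f w = 0" if fP: "f \<in> Pset s \<alpha> p" for f
    proof (cases "w = 0")
      case True then show ?thesis by (simp add: Bf_def)
    next
      case False
      have df: "degree f < s" using Pset_degree[OF s fP] .
      have dr: "degree (revs s w) < s" using degree_revs[OF s] .
      have "p dvd f" using Pset_dvd[OF pd fP] .
      then obtain a where fa: "f = p * a" by (auto elim: dvdE)
      have "revs s w = monom 1 (s - 1 - degree w) * (p' * reflect_poly z)"
        using revs_reflect[OF s dw] z rh by (simp add: reflect_poly_mult)
      then have "f * revs s w = X * (a * monom 1 (s - 1 - degree w) * reflect_poly z)"
        using fa Xpp by (simp add: algebra_simps)
      then have m0: "(f * revs s w) mod X = 0" by simp
      have "Bf s f w = coeff (f * revs s w) (s - 1)" by (rule Bf_coeff[OF s])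
      also have "\<dots> = coeff ((f * revs s w) mod X) (s - 1)"
      proof -
        have "degree (f * revs s w) \<le> 2 * s - 2"
          using degree_mult_le[of f "revs s w"] df dr by arith
        then show ?thesis using coeff_mod_top[OF s] X_def by metis
      qed
      finally show ?thesis using m0 by simp
    qed
    then show "w \<in> Perp s (Pset s \<alpha> p)" using dw by (auto simp: Perp_def)
  qed
qed



definition cmp :: "nat \<Rightarrow> nat \<Rightarrow> (nat \<Rightarrow> nat \<Rightarrow> 'a::field) \<Rightarrow> 'a \<Rightarrow> 'a poly" where
  "cmp s l c \<theta> = (\<Sum>i<s. \<Sum>j<l. monom (c i j * \<theta> ^ j) i)"

definition ip :: "nat \<Rightarrow> nat \<Rightarrow> (nat \<Rightarrow> nat \<Rightarrow> 'a::field) \<Rightarrow> (nat \<Rightarrow> nat \<Rightarrow> 'a) \<Rightarrow> 'a" where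
  "ip s l c v = (\<Sum>i<s. \<Sum>j<l. c i j * v i j)"

lemma coeff_comp: "coeff (cmp s l c \<theta>) n = (if n < s then (\<Sum>j<l. c n j * \<theta> ^ j) else 0)"
proof -
  have "coeff (cmp s l c \<theta>) n = (\<Sum>i<s. if i = n then (\<Sum>j<l. c i j * \<theta> ^ j) else 0)"
  proof -
    have "coeff (cmp s l c \<theta>) n = (\<Sum>i<s. \<Sum>j<l. if i = n then c i j * \<theta> ^ j else 0)"
      by (simp add: cmp_def coeff_sum coeff_monom)
    also have "\<dots> = (\<Sum>i<s. if i = n then (\<Sum>j<l. c i j * \<theta> ^ j) else 0)"
      by (rule sum.cong) auto
    finally show ?thesis .
  qed
  also have "\<dots> = (if n < s then (\<Sum>j<l. c n j * \<theta> ^ j) else 0)"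
    by (simp add: sum.delta')
  finally show ?thesis .
qed

lemma degree_comp: "0 < s \<Longrightarrow> degree (cmp s l c \<theta>) < s"
  by (rule degree_lessI) (auto simp: coeff_comp)

lemma poly_sum_less: "degree (g::'a::field poly) < l \<Longrightarrow> poly g x = (\<Sum>j<l. coeff g j * x ^ j)"
proof -
  assume d: "degree g < l"
  have "poly g x = (\<Sum>j\<le>degree g. coeff g j * x ^ j)" by (rule poly_altdef)
  also have "\<dots> = (\<Sum>j<l. coeff g j * x ^ j)"
    by (rule sum.mono_neutral_left) (use d in \<open>auto simp: coeff_eq_0\<close>)
  finally show ?thesis .
qed

lemma comp_prodR: "degree f < s \<Longrightarrow> degree g < l \<Longrightarrow>
    cmp s l (prodR s l f g) \<theta> = smult (poly g \<theta>) f"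
proof (rule poly_eqI)
  fix n assume df: "degree f < s" and dg: "degree g < l"
  show "coeff (cmp s l (prodR s l f g) \<theta>) n = coeff (smult (poly g \<theta>) f) n"
  proof (cases "n < s")
    case True
    then have "coeff (cmp s l (prodR s l f g) \<theta>) n = (\<Sum>j<l. coeff f n * (coeff g j * \<theta> ^ j))"
      by (simp add: coeff_comp prodR_def mult.assoc)
    also have "\<dots> = coeff f n * poly g \<theta>" by (simp add: poly_sum_less[OF dg] sum_distrib_left)
    finally show ?thesis by (simp add: mult.commute)
  next
    case False then show ?thesis using df by (simp add: coeff_comp coeff_eq_0)
  qed
qed

lemma comp_add: "cmp s l (\<lambda>i j. c i j + d i j) \<theta> = cmp s l c \<theta> + cmp s l d \<theta>"
  by (rule poly_eqI) (simp add: coeff_comp algebra_simps sum.distrib)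

lemma comp_sum: "cmp s l (\<lambda>i j. \<Sum>k\<in>K. F k i j) \<theta> = (\<Sum>k\<in>K. cmp s l (F k) \<theta>)"
proof (rule poly_eqI)
  fix n
  have "(\<Sum>j<l. (\<Sum>k\<in>K. F k n j) * \<theta> ^ j) = (\<Sum>j<l. \<Sum>k\<in>K. F k n j * \<theta> ^ j)"
    by (simp add: sum_distrib_right)
  also have "\<dots> = (\<Sum>k\<in>K. \<Sum>j<l. F k n j * \<theta> ^ j)" by (rule sum.swap)
  finally show "coeff (cmp s l (\<lambda>i j. \<Sum>k\<in>K. F k i j) \<theta>) n = coeff (\<Sum>k\<in>K. cmp s l (F k) \<theta>) n"
    by (simp add: coeff_comp coeff_sum)
qed

lemma ip_sum: "ip s l (\<lambda>i j. \<Sum>k\<in>K. F k i j) v = (\<Sum>k\<in>K. ip s l (F k) v)"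
proof -
  have "ip s l (\<lambda>i j. \<Sum>k\<in>K. F k i j) v = (\<Sum>i<s. \<Sum>j<l. \<Sum>k\<in>K. F k i j * v i j)"
    by (simp add: ip_def sum_distrib_right)
  also have "\<dots> = (\<Sum>i<s. \<Sum>k\<in>K. \<Sum>j<l. F k i j * v i j)"
    by (rule sum.cong[OF refl], rule sum.swap)
  also have "\<dots> = (\<Sum>k\<in>K. \<Sum>i<s. \<Sum>j<l. F k i j * v i j)" by (rule sum.swap)
  finally show ?thesis by (simp add: ip_def)
qed



definition Q4 :: "nat \<Rightarrow> nat \<Rightarrow> (nat \<Rightarrow> nat \<Rightarrow> nat \<Rightarrow> nat \<Rightarrow> 'b::comm_monoid_add) \<Rightarrow> 'b" where
  "Q4 s l F = (\<Sum>i1<s. \<Sum>j1<l. \<Sum>i2<s. \<Sum>j2<l. F i1 j1 i2 j2)"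

lemma Q4_swap: "(\<Sum>j\<in>J. Q4 s l (F j)) = Q4 s l (\<lambda>i1 j1 i2 j2. \<Sum>j\<in>J. F j i1 j1 i2 j2)"
  unfolding Q4_def
  apply (rule trans[OF sum.swap])
  apply (rule sum.cong[OF refl])
  apply (rule trans[OF sum.swap])
  apply (rule sum.cong[OF refl])
  apply (rule trans[OF sum.swap])
  apply (rule sum.cong[OF refl])
  apply (rule sum.swap)
  done

lemma Q4_coeff: "coeff (Q4 s l F) n = Q4 s l (\<lambda>i1 j1 i2 j2. coeff (F i1 j1 i2 j2) n)"
  unfolding Q4_def by (simp add: coeff_sum)

lemma Q4_diff: "Q4 s l F - Q4 s l G = Q4 s l (\<lambda>i1 j1 i2 j2. F i1 j1 i2 j2 - G i1 j1 i2 j2)"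
  for F G :: "nat \<Rightarrow> nat \<Rightarrow> nat \<Rightarrow> nat \<Rightarrow> 'b::ab_group_add"
  unfolding Q4_def by (simp add: sum_subtractf)

lemma Q4_dvd: "(\<And>i1 j1 i2 j2. (X::'b::comm_ring_1) dvd F i1 j1 i2 j2) \<Longrightarrow> X dvd Q4 s l F"
  unfolding Q4_def by (intro dvd_sum) auto

lemma Q4_cong: "(\<And>i1 j1 i2 j2. i1 < s \<Longrightarrow> j1 < l \<Longrightarrow> i2 < s \<Longrightarrow> j2 < l \<Longrightarrow> F i1 j1 i2 j2 = G i1 j1 i2 j2)
   \<Longrightarrow> Q4 s l F = Q4 s l G"
  unfolding Q4_def by (intro sum.cong) auto

lemma rmul_Q4: "rmul s l \<alpha> \<beta> c d = (\<lambda>i j. if i < s \<and> j < l then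
     Q4 s l (\<lambda>i1 j1 i2 j2. if (i1 + i2) mod s = i \<and> (j1 + j2) mod l = j
         then \<alpha> ^ ((i1 + i2) div s) * \<beta> ^ ((j1 + j2) div l) * c i1 j1 * d i2 j2
         else 0) else 0)"
  unfolding rmul_def Q4_def by simp

lemma monom_mod_xpoly:
  fixes W :: "'a::field"
  assumes s: "0 < s"
  shows "xpoly s \<alpha> dvd monom (\<alpha> ^ (i div s) * W) (i mod s) - monom W i"
proof -
  define X where "X = xpoly s \<alpha>"
  have m: "monom 1 s mod X = [:\<alpha>:]"
  proof -
    have "monom 1 s = X + [:\<alpha>:]" by (simp add: X_def xpoly_def)
    then have "monom 1 s mod X = [:\<alpha>:] mod X" by simp
    also have "\<dots> = [:\<alpha>:]" using s degree_xpoly[OF s, of \<alpha>] X_def by (intro mod_poly_less) simp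
    finally show ?thesis .
  qed
  have "monom W i = smult W (monom 1 s ^ (i div s) * monom 1 (i mod s))"
  proof -
    have "i = s * (i div s) + i mod s" by simp
    then have "monom (1::'a) i = monom 1 s ^ (i div s) * monom 1 (i mod s)"
      by (metis monom_power mult_monom power_one mult_1)
    then show ?thesis by (metis smult_monom mult.right_neutral)
  qed
  have c: "[:\<alpha>:] ^ n = [:\<alpha> ^ n:]" for n
    by (induct n) (auto simp: mult.commute)
  have "monom 1 s ^ (i div s) mod X = [:\<alpha>:] ^ (i div s) mod X"
    by (metis m power_mod)
  then have "X dvd monom 1 s ^ (i div s) - [:\<alpha> ^ (i div s):]"
    unfolding c by (simp add: mod_eq_dvd_iff)
  then have "X dvd smult W ((monom 1 s ^ (i div s) - [:\<alpha> ^ (i div s):]) * monom 1 (i mod s))"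
    by (intro dvd_smult dvd_mult2)
  moreover have "smult W ((monom 1 s ^ (i div s) - [:\<alpha> ^ (i div s):]) * monom 1 (i mod s))
     = monom W i - monom (\<alpha> ^ (i div s) * W) (i mod s)"
  proof -
    have e: "[:\<alpha> ^ (i div s):] * monom 1 (i mod s) = monom (\<alpha> ^ (i div s)) (i mod s)"
      by (metis monom_0 mult_monom mult.right_neutral add_0)
    show ?thesis unfolding \<open>monom W i = _\<close> left_diff_distrib smult_diff_right e
      by (simp add: smult_monom mult.commute)
  qed
  ultimately have "X dvd monom W i - monom (\<alpha> ^ (i div s) * W) (i mod s)" by simp
  then show ?thesis unfolding X_def by (metis dvd_minus_iff minus_diff_eq)
qed

lemma Q4_mult: "Q4 s l F * (x::'b::comm_semiring_1) = Q4 s l (\<lambda>i1 j1 i2 j2. F i1 j1 i2 j2 * x)"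
  unfolding Q4_def by (simp add: sum_distrib_right)

lemma theta_pow: "(\<theta>::'a::field) ^ l = \<beta> \<Longrightarrow> \<theta> ^ j = \<beta> ^ (j div l) * \<theta> ^ (j mod l)"
proof -
  assume th: "\<theta> ^ l = \<beta>"
  have "\<theta> ^ j = \<theta> ^ (l * (j div l) + j mod l)" by simp
  also have "\<dots> = (\<theta> ^ l) ^ (j div l) * \<theta> ^ (j mod l)" by (simp only: power_add power_mult)
  finally show ?thesis using th by simp
qed

lemma if0_mult: "(if P then a else 0) * t = (if P then a * t else (0::'b::semiring_0))"
  by simp

lemma comp_rmul:
  fixes a c :: "nat \<Rightarrow> nat \<Rightarrow> 'a::field"
  assumes s: "0 < s" and l: "0 < l" and th: "\<theta> ^ l = \<beta>"
  shows "cmp s l (rmul s l \<alpha> \<beta> a c) \<theta> = (cmp s l a \<theta> * cmp s l c \<theta>) mod xpoly s \<alpha>"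
proof -
  define X where "X = xpoly s \<alpha>"
  define T where "T = (\<lambda>i1 j1 i2 j2. monom (\<alpha> ^ ((i1 + i2) div s) * (a i1 j1 * c i2 j2 * \<theta> ^ (j1 + j2))) ((i1 + i2) mod s))"
  define M where "M = (\<lambda>i1 j1 i2 j2. monom (a i1 j1 * c i2 j2 * \<theta> ^ (j1 + j2)) (i1 + i2))"
  have A: "cmp s l (rmul s l \<alpha> \<beta> a c) \<theta> = Q4 s l T"
  proof (rule poly_eqI)
    fix n
    show "coeff (cmp s l (rmul s l \<alpha> \<beta> a c) \<theta>) n = coeff (Q4 s l T) n"
    proof (cases "n < s")
      case False
      have "Q4 s l (\<lambda>i1 j1 i2 j2. coeff (T i1 j1 i2 j2) n) = Q4 s l (\<lambda>_ _ _ _. 0)"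
        by (rule Q4_cong) (use False s in \<open>auto simp: T_def coeff_monom\<close>)
      then show ?thesis using False unfolding Q4_coeff by (simp add: coeff_comp Q4_def)
    next
      case True
      have "coeff (cmp s l (rmul s l \<alpha> \<beta> a c) \<theta>) n =
        (\<Sum>j<l. Q4 s l (\<lambda>i1 j1 i2 j2. if (i1 + i2) mod s = n \<and> (j1 + j2) mod l = j
         then \<alpha> ^ ((i1 + i2) div s) * \<beta> ^ ((j1 + j2) div l) * a i1 j1 * c i2 j2 * \<theta> ^ j else 0))"
        using True by (simp add: coeff_comp rmul_Q4 Q4_mult if0_mult)
      also have "\<dots> = Q4 s l (\<lambda>i1 j1 i2 j2. \<Sum>j<l. if (i1 + i2) mod s = n \<and> (j1 + j2) mod l = j
         then \<alpha> ^ ((i1 + i2) div s) * \<beta> ^ ((j1 + j2) div l) * a i1 j1 * c i2 j2 * \<theta> ^ j else 0)"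
        by (rule Q4_swap)
      also have "\<dots> = Q4 s l (\<lambda>i1 j1 i2 j2. coeff (T i1 j1 i2 j2) n)"
      proof (rule Q4_cong)
        fix i1 j1 i2 j2
        have lt: "(j1 + j2) mod l < l" using l by simp
        have "(\<Sum>j<l. if (i1 + i2) mod s = n \<and> (j1 + j2) mod l = j
         then \<alpha> ^ ((i1 + i2) div s) * \<beta> ^ ((j1 + j2) div l) * a i1 j1 * c i2 j2 * \<theta> ^ j else 0)
          = (\<Sum>j<l. if j = (j1 + j2) mod l then (if (i1 + i2) mod s = n then
              \<alpha> ^ ((i1 + i2) div s) * \<beta> ^ ((j1 + j2) div l) * a i1 j1 * c i2 j2 * \<theta> ^ j else 0) else 0)"
          by (rule sum.cong) auto
        also have "\<dots> = (if (i1 + i2) mod s = n then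
              \<alpha> ^ ((i1 + i2) div s) * \<beta> ^ ((j1 + j2) div l) * a i1 j1 * c i2 j2 * \<theta> ^ ((j1 + j2) mod l) else 0)"
          using lt by (simp add: sum.delta')
        also have "\<dots> = coeff (T i1 j1 i2 j2) n"
          unfolding T_def coeff_monom using theta_pow[OF th, of "j1 + j2"]
          by (auto simp: ac_simps)
        finally show "(\<Sum>j<l. if (i1 + i2) mod s = n \<and> (j1 + j2) mod l = j
         then \<alpha> ^ ((i1 + i2) div s) * \<beta> ^ ((j1 + j2) div l) * a i1 j1 * c i2 j2 * \<theta> ^ j else 0)
          = coeff (T i1 j1 i2 j2) n" .
      qed
      also have "\<dots> = coeff (Q4 s l T) n" by (simp add: Q4_coeff)
      finally show ?thesis .
    qed
  qed
  have B: "cmp s l a \<theta> * cmp s l c \<theta> = Q4 s l M"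
  proof -
    have "cmp s l a \<theta> * cmp s l c \<theta> = Q4 s l (\<lambda>i1 j1 i2 j2. monom (a i1 j1 * \<theta> ^ j1) i1 * monom (c i2 j2 * \<theta> ^ j2) i2)"
      unfolding cmp_def Q4_def by (simp only: sum_distrib_right) (simp only: sum_distrib_left)
    also have "\<dots> = Q4 s l M"
      by (rule Q4_cong) (simp add: M_def mult_monom power_add ac_simps)
    finally show ?thesis .
  qed
  have "X dvd Q4 s l T - Q4 s l M"
    unfolding Q4_diff T_def M_def X_def by (rule Q4_dvd, rule monom_mod_xpoly[OF s])
  then have "Q4 s l M mod X = Q4 s l T mod X" by (metis mod_eq_dvd_iff)
  also have "\<dots> = Q4 s l T"
    using A degree_comp[OF s] degree_xpoly[OF s, of \<alpha>] X_def by (metis mod_poly_less)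
  finally show ?thesis using A B X_def by simp
qed



locale tsetup =
  fixes s l :: nat and \<alpha> \<beta> \<omega> :: "'a::field" and r :: nat and mk :: "nat \<Rightarrow> nat"
    and th :: "nat \<Rightarrow> 'a"
  assumes s: "0 < s" and l: "0 < l" and \<alpha>: "\<alpha> \<in> {1, -1}" and \<beta>: "\<beta> \<in> {1, -1}"
    and th_def: "\<And>k. th k = \<omega> ^ (1 + k * r)"
    and inj: "\<And>j k. j < l \<Longrightarrow> k < l \<Longrightarrow> th j = th k \<Longrightarrow> j = k"
    and thl: "\<And>k. th k ^ l = \<beta>"
    and mk: "\<And>k. k < l \<Longrightarrow> mk k < l \<and> mk (mk k) = k \<and> th k * th (mk k) = 1"
begin

lemma eta_th: "eta \<omega> r l k = (\<Prod>j\<in>{0..<l} - {k}. smult (inverse (th k - th j)) [:- (th j), 1:])"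
  by (simp add: eta_def th_def)

lemma th_nz: "k < l \<Longrightarrow> th k \<noteq> 0"
  using mk[of k] by auto

lemma card_th: "card (th ` {..<l}) = l"
proof -
  have "inj_on th {..<l}" by (rule inj_onI) (use inj in auto)
  then show ?thesis by (simp add: card_image)
qed

lemma uniq: "degree g < l \<Longrightarrow> (\<And>n. n < l \<Longrightarrow> poly g (th n) = 0) \<Longrightarrow> g = 0"
  by (rule poly_eqI_degree[of "th ` {..<l}"]) (use l in \<open>auto simp: card_th\<close>)

lemma eta_at: "k < l \<Longrightarrow> n < l \<Longrightarrow> poly (eta \<omega> r l k) (th n) = (if n = k then 1 else 0)"
proof -
  assume k: "k < l" and n: "n < l"
  have "poly (eta \<omega> r l k) (th n) =
      (\<Prod>j\<in>{0..<l} - {k}. inverse (th k - th j) * (th n - th j))"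
    by (simp add: eta_th poly_prod algebra_simps)
  also have "\<dots> = (if n = k then 1 else 0)"
  proof (cases "n = k")
    case True
    have "(\<Prod>j\<in>{0..<l} - {k}. inverse (th k - th j) * (th n - th j)) = (\<Prod>j\<in>{0..<l} - {k}. 1)"
    proof (rule prod.cong[OF refl])
      fix j assume j: "j \<in> {0..<l} - {k}"
      then have "th k \<noteq> th j" using inj[of j k] k by auto
      then show "inverse (th k - th j) * (th n - th j) = 1" using True by simp
    qed
    then show ?thesis using True by simp
  next
    case False
    then have "n \<in> {0..<l} - {k}" using n by auto
    then have "(\<Prod>j\<in>{0..<l} - {k}. inverse (th k - th j) * (th n - th j)) = 0"
      by (intro prod_zero) auto
    then show ?thesis using False by simp
  qed
  finally show ?thesis .
qed

lemma deg_eta: "k < l \<Longrightarrow> degree (eta \<omega> r l k) < l"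
proof -
  assume k: "k < l"
  have "degree (eta \<omega> r l k) \<le> (\<Sum>j\<in>{0..<l} - {k}. degree (smult (inverse (th k - th j)) [:- th j, 1:]))"
    unfolding eta_th by (rule order.trans[OF degree_prod_sum_le]) auto
  also have "\<dots> \<le> (\<Sum>j\<in>{0..<l} - {k}. 1)"
    by (rule sum_mono) (metis degree_smult_le degree_pCons_eq_if one_neq_zero pCons_eq_0_iff
        degree_0 le_trans order_refl One_nat_def)
  also have "\<dots> = l - 1" using k by simp
  finally show ?thesis using l by simp
qed

lemma geo_at:
  assumes k: "k < l" and n: "n < l"
  shows "(\<Sum>j<l. th (mk k) ^ j * th n ^ j) = (if n = k then of_nat l else 0)"
proof -
  define z where "z = th (mk k) * th n"
  have kk: "th k * th (mk k) = 1" using mk[OF k] by auto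
  have "(\<Sum>j<l. th (mk k) ^ j * th n ^ j) = (\<Sum>j<l. z ^ j)" by (simp add: z_def power_mult_distrib)
  also have "\<dots> = (if n = k then of_nat l else 0)"
  proof (cases "n = k")
    case True
    then have "z = 1" using kk by (simp add: z_def mult.commute)
    then show ?thesis using True by simp
  next
    case False
    have z1: "z \<noteq> 1"
    proof
      assume "z = 1"
      then have "th n = th k" using kk unfolding z_def
        by (metis mult.assoc mult.commute mult.right_neutral)
      then show False using inj[OF n k] False by auto
    qed
    have bb: "\<beta> * \<beta> = 1" using \<beta> by auto
    have "th k ^ l * th (mk k) ^ l = 1" using kk by (metis power_mult_distrib power_one)
    then have "th (mk k) ^ l * \<beta> = 1" by (simp add: thl mult.commute)
    then have "z ^ l = 1" unfolding z_def power_mult_distrib thl by simp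
    then show ?thesis using False z1 by (simp add: geometric_sum)
  qed
  finally show ?thesis .
qed

definition Gk :: "nat \<Rightarrow> 'a poly" where "Gk k = (\<Sum>j<l. monom (th (mk k) ^ j) j)"

lemma coeff_Gk: "coeff (Gk k) j = (if j < l then th (mk k) ^ j else 0)"
  by (simp add: Gk_def coeff_sum coeff_monom)

lemma degree_Gk: "degree (Gk k) < l"
  using l by (intro degree_lessI) (auto simp: coeff_Gk)

lemma poly_Gk: "k < l \<Longrightarrow> n < l \<Longrightarrow> poly (Gk k) (th n) = (if n = k then of_nat l else 0)"
  using geo_at by (simp add: Gk_def poly_sum poly_monom)

lemma l_nz: "(of_nat l :: 'a) \<noteq> 0"
proof
  assume z: "(of_nat l :: 'a) = 0"
  have "Gk 0 = 0" using degree_Gk by (rule uniq) (use poly_Gk[OF l] z in auto)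
  then have "coeff (Gk 0) 0 = 0" by simp
  then show False using l by (simp add: coeff_Gk)
qed

lemma Gk_eta: "k < l \<Longrightarrow> Gk k = smult (of_nat l) (eta \<omega> r l k)"
proof -
  assume k: "k < l"
  have "Gk k - smult (of_nat l) (eta \<omega> r l k) = 0"
  proof (rule uniq)
    show "degree (Gk k - smult (of_nat l) (eta \<omega> r l k)) < l"
      using degree_Gk deg_eta[OF k] by (intro degree_diff_less) (auto intro: le_less_trans degree_smult_le)
  next
    fix n assume "n < l"
    then show "poly (Gk k - smult (of_nat l) (eta \<omega> r l k)) (th n) = 0"
      using k by (simp add: poly_Gk eta_at)
  qed
  then show ?thesis by simp
qed

lemma coeff_eta: "k < l \<Longrightarrow> j < l \<Longrightarrow> coeff (eta \<omega> r l k) j = th (mk k) ^ j / of_nat l"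
proof -
  assume k: "k < l" and j: "j < l"
  have "coeff (Gk k) j = of_nat l * coeff (eta \<omega> r l k) j" using Gk_eta[OF k] by simp
  then show ?thesis using j l_nz by (simp add: coeff_Gk field_simps)
qed

lemma comp_inj:
  assumes c: "c \<in> Rsp s l" and d: "d \<in> Rsp s l"
    and e: "\<And>k. k < l \<Longrightarrow> cmp s l c (th k) = cmp s l d (th k)"
  shows "c = d"
proof (intro ext)
  fix i j
  show "c i j = d i j"
  proof (cases "i < s \<and> j < l")
    case False then show ?thesis using c d by (auto simp: Rsp_def)
  next
    case True
    define g where "g = (\<Sum>j<l. monom (c i j - d i j) j)"
    have cg: "coeff g j' = (if j' < l then c i j' - d i j' else 0)" for j'
      by (simp add: g_def coeff_sum coeff_monom)
    have "g = 0"
    proof (rule uniq)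
      show "degree g < l" using l by (intro degree_lessI) (auto simp: cg)
    next
      fix n assume n: "n < l"
      have "coeff (cmp s l c (th n)) i = coeff (cmp s l d (th n)) i" using e[OF n] by simp
      then have "(\<Sum>j<l. c i j * th n ^ j) = (\<Sum>j<l. d i j * th n ^ j)"
        using True by (simp add: coeff_comp)
      then show "poly g (th n) = 0"
        by (simp add: g_def poly_sum poly_monom left_diff_distrib sum_subtractf)
    qed
    then have "coeff g j = 0" by simp
    then show ?thesis using True by (simp add: cg)
  qed
qed

lemma prodR_Rsp: "prodR s l f g \<in> Rsp s l"
  by (simp add: prodR_def Rsp_def)

lemma comp_eta: "degree f < s \<Longrightarrow> k < l \<Longrightarrow> n < l \<Longrightarrow>
    cmp s l (prodR s l f (eta \<omega> r l k)) (th n) = (if n = k then f else 0)"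
  by (simp add: comp_prodR deg_eta eta_at)

lemma ip_eta:
  assumes f: "degree f < s" and k: "k < l"
  shows "ip s l (prodR s l f (eta \<omega> r l k)) v = Bf s f (cmp s l v (th (mk k))) / of_nat l"
proof -
  have "ip s l (prodR s l f (eta \<omega> r l k)) v =
      (\<Sum>i<s. \<Sum>j<l. coeff f i * (th (mk k) ^ j / of_nat l) * v i j)"
    by (simp add: ip_def prodR_def coeff_eta[OF k])
  also have "\<dots> = (\<Sum>i<s. coeff f i * (\<Sum>j<l. v i j * th (mk k) ^ j)) / of_nat l"
    by (simp add: sum_divide_distrib sum_distrib_left ac_simps)
  also have "\<dots> = Bf s f (cmp s l v (th (mk k))) / of_nat l"
    by (simp add: Bf_def coeff_comp)
  finally show ?thesis .
qed

end



lemma modeq_dvd: "a dvd X \<Longrightarrow> f mod X = (t * a) mod X \<Longrightarrow> a dvd (f::'a::field poly)"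
proof -
  assume aX: "a dvd X" and e: "f mod X = (t * a) mod X"
  have "a dvd (t * a) mod X" using aX by (intro dvd_mod) auto
  then have "a dvd f mod X" using e by simp
  then show ?thesis using aX dvd_mod_iff by blast
qed

lemma Pset_eq_dvd: "a dvd xpoly s \<alpha> \<Longrightarrow> Pset s \<alpha> a = Pset s \<alpha> b \<Longrightarrow> a dvd (b::'a::field poly)"
proof -
  assume aX: "a dvd xpoly s \<alpha>" and e: "Pset s \<alpha> a = Pset s \<alpha> b"
  have "(1 * b) mod xpoly s \<alpha> \<in> Pset s \<alpha> b" unfolding Pset_def by blast
  then have "b mod xpoly s \<alpha> \<in> Pset s \<alpha> a" using e by simp
  then obtain g where "b mod xpoly s \<alpha> = (g * a) mod xpoly s \<alpha>" unfolding Pset_def by auto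
  then show ?thesis using modeq_dvd[OF aX] by blast
qed

lemma dvd_Pset_eq: "a dvd b \<Longrightarrow> b dvd a \<Longrightarrow> Pset s \<alpha> a = Pset s \<alpha> (b::'a::field poly)"
proof -
  have sub: "Pset s \<alpha> x \<subseteq> Pset s \<alpha> y" if "y dvd x" for x y :: "'a poly"
  proof
    fix f assume "f \<in> Pset s \<alpha> x"
    then obtain g where g: "f = (g * x) mod xpoly s \<alpha>" unfolding Pset_def by auto
    obtain u where "x = y * u" using \<open>y dvd x\<close> by (auto elim: dvdE)
    then have "f = ((g * u) * y) mod xpoly s \<alpha>" using g by (simp add: ac_simps)
    then show "f \<in> Pset s \<alpha> y" unfolding Pset_def by blast
  qed
  assume "a dvd b" "b dvd a"
  then show ?thesis using sub by blast
qed

locale csetup = tsetup s l \<alpha> \<beta> \<omega> r mk th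
  for s l :: nat and \<alpha> \<beta> \<omega> :: "'a::field" and r :: nat and mk :: "nat \<Rightarrow> nat"
    and th :: "nat \<Rightarrow> 'a" +
  fixes C :: "(nat \<Rightarrow> nat \<Rightarrow> 'a) set" and p :: "nat \<Rightarrow> 'a poly"
  assumes ideal: "R_ideal s l \<alpha> \<beta> C"
    and pk: "\<And>j. j < l \<Longrightarrow> lead_coeff (p j) = 1 \<and> p j dvd xpoly s \<alpha> \<and> Iset s l \<omega> r C j = Pset s \<alpha> (p j)"
begin

lemma C_Rsp: "C \<subseteq> Rsp s l" using ideal by (simp add: R_ideal_def)

lemma C_sum:
  assumes "finite K" "\<And>k. k \<in> K \<Longrightarrow> F k \<in> C"
  shows "(\<lambda>i j. \<Sum>k\<in>K. F k i j) \<in> C"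
  using assms
proof (induction K rule: finite_induct)
  case empty then show ?case using ideal by (simp add: R_ideal_def)
next
  case (insert a K)
  have "(\<lambda>i j. F a i j + (\<Sum>k\<in>K. F k i j)) \<in> C"
    using ideal insert by (simp add: R_ideal_def)
  then show ?case using insert by simp
qed

lemma Rsp_sum: "(\<lambda>i j. \<Sum>k\<in>K. prodR s l (F k) (G k) i j) \<in> Rsp s l"
  by (simp add: Rsp_def prodR_def)

lemma decomp:
  assumes c: "c \<in> Rsp s l"
  shows "c = (\<lambda>i j. \<Sum>k<l. prodR s l (cmp s l c (th k)) (eta \<omega> r l k) i j)"
proof (rule comp_inj[OF c Rsp_sum])
  fix n assume n: "n < l"
  have "cmp s l (\<lambda>i j. \<Sum>k<l. prodR s l (cmp s l c (th k)) (eta \<omega> r l k) i j) (th n)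
      = (\<Sum>k<l. cmp s l (prodR s l (cmp s l c (th k)) (eta \<omega> r l k)) (th n))"
    by (rule comp_sum)
  also have "\<dots> = (\<Sum>k<l. if n = k then cmp s l c (th k) else 0)"
    using n by (intro sum.cong) (auto simp: comp_eta[OF degree_comp[OF s]])
  also have "\<dots> = cmp s l c (th n)" using n by simp
  finally show "cmp s l c (th n) = cmp s l (\<lambda>i j. \<Sum>k<l. prodR s l (cmp s l c (th k)) (eta \<omega> r l k) i j) (th n)"
    by simp
qed

lemma Iset_P: "k < l \<Longrightarrow> f \<in> Pset s \<alpha> (p k) \<Longrightarrow> prodR s l f (eta \<omega> r l k) \<in> C"
  using pk[of k] by (auto simp: Iset_def)

lemma memC: "c \<in> C \<longleftrightarrow> c \<in> Rsp s l \<and> (\<forall>k<l. cmp s l c (th k) \<in> Pset s \<alpha> (p k))"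
proof
  assume c: "c \<in> C"
  then have cR: "c \<in> Rsp s l" using C_Rsp by auto
  have "cmp s l c (th k) \<in> Pset s \<alpha> (p k)" if k: "k < l" for k
  proof -
    have e: "prodR s l (cmp s l c (th k)) (eta \<omega> r l k) = rmul s l \<alpha> \<beta> (prodR s l 1 (eta \<omega> r l k)) c"
    proof (rule comp_inj[OF prodR_Rsp])
      have "rmul s l \<alpha> \<beta> (prodR s l 1 (eta \<omega> r l k)) c \<in> C"
        using ideal c prodR_Rsp[of 1 "eta \<omega> r l k"] unfolding R_ideal_def by blast
      then show "rmul s l \<alpha> \<beta> (prodR s l 1 (eta \<omega> r l k)) c \<in> Rsp s l"
        using C_Rsp by auto
    next
      fix n assume n: "n < l"
      have "cmp s l (rmul s l \<alpha> \<beta> (prodR s l 1 (eta \<omega> r l k)) c) (th n)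
          = (cmp s l (prodR s l 1 (eta \<omega> r l k)) (th n) * cmp s l c (th n)) mod xpoly s \<alpha>"
        by (rule comp_rmul[OF s l thl])
      also have "\<dots> = (if n = k then cmp s l c (th n) mod xpoly s \<alpha> else 0)"
        using n k s by (simp add: comp_eta)
      also have "\<dots> = (if n = k then cmp s l c (th n) else 0)"
        using mod_poly_less[of "cmp s l c (th n)" "xpoly s \<alpha>"] degree_comp[OF s, of l c "th n"]
          degree_xpoly[OF s, of \<alpha>] by auto
      also have "\<dots> = cmp s l (prodR s l (cmp s l c (th k)) (eta \<omega> r l k)) (th n)"
        using n k by (simp add: comp_eta[OF degree_comp[OF s]])
      finally show "cmp s l (prodR s l (cmp s l c (th k)) (eta \<omega> r l k)) (th n) =
          cmp s l (rmul s l \<alpha> \<beta> (prodR s l 1 (eta \<omega> r l k)) c) (th n)" by simp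
    qed
    have "rmul s l \<alpha> \<beta> (prodR s l 1 (eta \<omega> r l k)) c \<in> C"
      using ideal c prodR_Rsp[of 1 "eta \<omega> r l k"] unfolding R_ideal_def by blast
    then have "cmp s l c (th k) \<in> Iset s l \<omega> r C k"
      using e degree_comp[OF s] by (simp add: Iset_def)
    then show ?thesis using pk[OF k] by simp
  qed
  then show "c \<in> Rsp s l \<and> (\<forall>k<l. cmp s l c (th k) \<in> Pset s \<alpha> (p k))" using cR by auto
next
  assume h: "c \<in> Rsp s l \<and> (\<forall>k<l. cmp s l c (th k) \<in> Pset s \<alpha> (p k))"
  have "(\<lambda>i j. \<Sum>k<l. prodR s l (cmp s l c (th k)) (eta \<omega> r l k) i j) \<in> C"
  proof (rule C_sum)
    fix k assume "k \<in> {..<l}"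
    then show "prodR s l (cmp s l c (th k)) (eta \<omega> r l k) \<in> C" using h Iset_P by blast
  qed simp
  moreover have "c = (\<lambda>i j. \<Sum>k<l. prodR s l (cmp s l c (th k)) (eta \<omega> r l k) i j)"
    using h by (intro decomp) auto
  ultimately show "c \<in> C" by simp
qed

lemma memD: "v \<in> R_dual s l C \<longleftrightarrow> v \<in> Rsp s l \<and> (\<forall>k<l. cmp s l v (th (mk k)) \<in> Perp s (Pset s \<alpha> (p k)))"
proof
  assume v: "v \<in> R_dual s l C"
  then have vR: "v \<in> Rsp s l" and o: "\<And>c. c \<in> C \<Longrightarrow> ip s l c v = 0"
    by (auto simp: R_dual_def ip_def)
  have "cmp s l v (th (mk k)) \<in> Perp s (Pset s \<alpha> (p k))" if k: "k < l" for k
  proof -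
    have "Bf s f (cmp s l v (th (mk k))) = 0" if f: "f \<in> Pset s \<alpha> (p k)" for f
    proof -
      have "ip s l (prodR s l f (eta \<omega> r l k)) v = 0" using o Iset_P[OF k f] by blast
      then show ?thesis using ip_eta[OF Pset_degree[OF s f] k] l_nz by simp
    qed
    then show ?thesis using degree_comp[OF s] by (auto simp: Perp_def)
  qed
  then show "v \<in> Rsp s l \<and> (\<forall>k<l. cmp s l v (th (mk k)) \<in> Perp s (Pset s \<alpha> (p k)))" using vR by auto
next
  assume h: "v \<in> Rsp s l \<and> (\<forall>k<l. cmp s l v (th (mk k)) \<in> Perp s (Pset s \<alpha> (p k)))"
  have "ip s l c v = 0" if c: "c \<in> C" for c
  proof -
    have cR: "c \<in> Rsp s l" and cP: "\<And>k. k < l \<Longrightarrow> cmp s l c (th k) \<in> Pset s \<alpha> (p k)"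
      using memC c by auto
    have "ip s l c v = ip s l (\<lambda>i j. \<Sum>k<l. prodR s l (cmp s l c (th k)) (eta \<omega> r l k) i j) v"
      using decomp[OF cR] by (rule arg_cong[where f="\<lambda>c. ip s l c v"])
    also have "\<dots> = (\<Sum>k<l. ip s l (prodR s l (cmp s l c (th k)) (eta \<omega> r l k)) v)"
      by (rule ip_sum)
    also have "\<dots> = (\<Sum>k<l. Bf s (cmp s l c (th k)) (cmp s l v (th (mk k))) / of_nat l)"
      by (intro sum.cong) (auto simp: ip_eta[OF degree_comp[OF s]])
    also have "\<dots> = 0"
      using h cP by (intro sum.neutral) (auto simp: Perp_def)
    finally show ?thesis .
  qed
  then show "v \<in> R_dual s l C" using h by (auto simp: R_dual_def ip_def)
qed

definition hh :: "nat \<Rightarrow> 'a poly" where "hh j = reflect_poly (xpoly s \<alpha> div p j)"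

lemma p_nz: "j < l \<Longrightarrow> p j \<noteq> 0" using pk[of j] by auto

lemma zero_Pset: "0 \<in> Pset s \<alpha> q" unfolding Pset_def by (auto intro!: exI[of _ 0])

lemma memD': "v \<in> R_dual s l C \<longleftrightarrow> v \<in> Rsp s l \<and> (\<forall>k<l. cmp s l v (th k) \<in> Pset s \<alpha> (hh (mk k)))"
proof -
  have o: "\<And>k. k < l \<Longrightarrow> Perp s (Pset s \<alpha> (p k)) = Pset s \<alpha> (hh k)"
    unfolding hh_def using orth[OF s \<alpha> p_nz] pk by blast
  have "v \<in> R_dual s l C \<longleftrightarrow> v \<in> Rsp s l \<and> (\<forall>k<l. cmp s l v (th (mk k)) \<in> Pset s \<alpha> (hh k))"
    using memD o by auto
  also have "\<dots> \<longleftrightarrow> v \<in> Rsp s l \<and> (\<forall>k<l. cmp s l v (th k) \<in> Pset s \<alpha> (hh (mk k)))"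
    using mk by metis
  finally show ?thesis .
qed

lemma sd_iff: "self_dual s l C \<longleftrightarrow> (\<forall>k<l. Pset s \<alpha> (p k) = Pset s \<alpha> (hh (mk k)))"
proof
  assume sd: "self_dual s l C"
  then have eq: "\<And>v. v \<in> C \<longleftrightarrow> v \<in> R_dual s l C" by (auto simp: self_dual_def)
  show "\<forall>k<l. Pset s \<alpha> (p k) = Pset s \<alpha> (hh (mk k))"
  proof (intro allI impI)
    fix k assume k: "k < l"
    have single: "(\<forall>n<l. cmp s l (prodR s l f (eta \<omega> r l k)) (th n) \<in> S n) \<longleftrightarrow> f \<in> S k"
      if "degree f < s" "\<And>n. 0 \<in> S n" for f S
      using that k by (auto simp: comp_eta)
    show "Pset s \<alpha> (p k) = Pset s \<alpha> (hh (mk k))"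
    proof (intro set_eqI iffI)
      fix f assume f: "f \<in> Pset s \<alpha> (p k)"
      have df: "degree f < s" using Pset_degree[OF s f] .
      have "prodR s l f (eta \<omega> r l k) \<in> C"
        using memC single[OF df, of "\<lambda>n. Pset s \<alpha> (p n)"] f zero_Pset prodR_Rsp by blast
      then have "prodR s l f (eta \<omega> r l k) \<in> R_dual s l C" using eq by blast
      then show "f \<in> Pset s \<alpha> (hh (mk k))"
        using memD' single[OF df, of "\<lambda>n. Pset s \<alpha> (hh (mk n))"] zero_Pset by blast
    next
      fix f assume f: "f \<in> Pset s \<alpha> (hh (mk k))"
      have df: "degree f < s" using Pset_degree[OF s f] .
      have "prodR s l f (eta \<omega> r l k) \<in> R_dual s l C"
        using memD' single[OF df, of "\<lambda>n. Pset s \<alpha> (hh (mk n))"] f zero_Pset prodR_Rsp by blast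
      then have "prodR s l f (eta \<omega> r l k) \<in> C" using eq by blast
      then show "f \<in> Pset s \<alpha> (p k)"
        using memC single[OF df, of "\<lambda>n. Pset s \<alpha> (p n)"] zero_Pset by blast
    qed
  qed
next
  assume h: "\<forall>k<l. Pset s \<alpha> (p k) = Pset s \<alpha> (hh (mk k))"
  have "v \<in> C \<longleftrightarrow> v \<in> R_dual s l C" for v
    using memC memD' h by auto
  then show "self_dual s l C" by (auto simp: self_dual_def)
qed

lemma hh_props:
  assumes j: "j < l"
  shows "hh j dvd xpoly s \<alpha> \<and> hh j \<noteq> 0 \<and> degree (hh j) = s - degree (p j) \<and> degree (p j) \<le> s"
proof -
  define X where "X = xpoly s \<alpha>"
  define p' where "p' = X div p j"
  have Xpp: "X = p j * p'" using pk[OF j] X_def p'_def by simp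
  have Xnz: "X \<noteq> 0" using xpoly_nz[OF s] X_def by auto
  then have p'nz: "p' \<noteq> 0" using Xpp by auto
  have an: "\<alpha> \<noteq> 0" using \<alpha> by auto
  have c0: "coeff p' 0 \<noteq> 0"
  proof -
    have "coeff X 0 = coeff (p j) 0 * coeff p' 0" using Xpp coeff_mult_0 by metis
    moreover have "coeff X 0 = - \<alpha>" using s X_def by (simp add: coeff_xpoly)
    ultimately show ?thesis using an by auto
  qed
  have hd: "hh j dvd X"
  proof -
    have "reflect_poly X = reflect_poly (p j) * reflect_poly p'"
      using Xpp by (metis reflect_poly_mult)
    then have "reflect_poly X = hh j * reflect_poly (p j)"
      by (simp add: hh_def X_def p'_def mult.commute)
    then have "hh j dvd smult (- \<alpha>) X" using reflect_xpoly[OF s \<alpha>] X_def by (metis dvd_triv_left)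
    then show ?thesis using an by (simp add: dvd_smult_cancel)
  qed
  have dX: "degree X = degree (p j) + degree p'"
    using Xpp p_nz[OF j] p'nz by (simp add: degree_mult_eq)
  have "degree (hh j) = degree p'" using c0 by (simp add: hh_def X_def p'_def)
  moreover have "degree X = s" using degree_xpoly[OF s] X_def by simp
  ultimately show ?thesis using hd c0 dX X_def by (auto simp: hh_def p'_def)
qed

lemma final:
  "(\<forall>k<l. Pset s \<alpha> (p k) = Pset s \<alpha> (hh (mk k))) \<longleftrightarrow>
   (s * l = 2 * (\<Sum>j<l. degree (p j)) \<and>
    (\<forall>k<l. \<exists>t t'. t \<noteq> 0 \<and> degree t < s \<and> t' \<noteq> 0 \<and> degree t' < s \<and>
       hh k mod xpoly s \<alpha> = (t * p (mk k)) mod xpoly s \<alpha> \<and>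
       p k mod xpoly s \<alpha> = (t' * hh (mk k)) mod xpoly s \<alpha>))"
proof
  assume eq: "\<forall>k<l. Pset s \<alpha> (p k) = Pset s \<alpha> (hh (mk k))"
  have d1: "p k dvd hh (mk k)" and d2: "hh (mk k) dvd p k" if k: "k < l" for k
  proof -
    show "p k dvd hh (mk k)" using Pset_eq_dvd pk[OF k] eq k by blast
    show "hh (mk k) dvd p k" using Pset_eq_dvd hh_props[of "mk k"] mk[OF k] eq k by metis
  qed
  have deq: "degree (p k) = degree (hh (mk k))" if k: "k < l" for k
    using dvd_imp_degree_le[OF d1[OF k]] dvd_imp_degree_le[OF d2[OF k]] p_nz[OF k]
      hh_props[of "mk k"] mk[OF k] by fastforce
  have ds: "degree (p k) = s - degree (p (mk k))" if k: "k < l" for k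
    using deq[OF k] hh_props[of "mk k"] mk[OF k] by auto
  have "(\<Sum>j<l. degree (p j)) = (\<Sum>j<l. s - degree (p (mk j)))"
    using ds by (intro sum.cong) auto
  also have "\<dots> = (\<Sum>j<l. s - degree (p j))"
    by (rule sum.reindex_bij_witness[of _ mk mk]) (use mk in auto)
  finally have "(\<Sum>j<l. degree (p j)) + (\<Sum>j<l. degree (p j)) = (\<Sum>j<l. degree (p j)) + (\<Sum>j<l. s - degree (p j))"
    by simp
  also have "\<dots> = (\<Sum>j<l. s)" unfolding sum.distrib[symmetric]
    using hh_props by (intro sum.cong) auto
  finally have i: "s * l = 2 * (\<Sum>j<l. degree (p j))" by (simp add: mult.commute mult_2)
  have ii: "\<exists>t t'. t \<noteq> 0 \<and> degree t < s \<and> t' \<noteq> 0 \<and> degree t' < s \<and>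
       hh k mod xpoly s \<alpha> = (t * p (mk k)) mod xpoly s \<alpha> \<and>
       p k mod xpoly s \<alpha> = (t' * hh (mk k)) mod xpoly s \<alpha>" if k: "k < l" for k
  proof -
    have mkk: "mk k < l" "mk (mk k) = k" using mk[OF k] by auto
    obtain t' where t': "p k = hh (mk k) * t'" using d2[OF k] by (auto elim: dvdE)
    obtain t where t: "hh k = p (mk k) * t" using d1[OF mkk(1)] mkk(2) by (auto elim: dvdE)
    have t'nz: "t' \<noteq> 0" using t' p_nz[OF k] by auto
    have tnz: "t \<noteq> 0" using t hh_props[OF k] by auto
    have "degree (p k) = degree (hh (mk k)) + degree t'"
      using t' t'nz hh_props[OF mkk(1)] by (simp add: degree_mult_eq)
    then have dt': "degree t' = 0" using deq[OF k] by simp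
    have "degree (hh k) = degree (p (mk k)) + degree t"
      using t tnz p_nz[OF mkk(1)] by (simp add: degree_mult_eq)
    then have dt: "degree t = 0" using deq[OF mkk(1)] mkk(2) by simp
    show ?thesis using t t' tnz t'nz dt dt' s by (intro exI[of _ t] exI[of _ t']) (simp add: mult.commute)
  qed
  show "s * l = 2 * (\<Sum>j<l. degree (p j)) \<and>
    (\<forall>k<l. \<exists>t t'. t \<noteq> 0 \<and> degree t < s \<and> t' \<noteq> 0 \<and> degree t' < s \<and>
       hh k mod xpoly s \<alpha> = (t * p (mk k)) mod xpoly s \<alpha> \<and>
       p k mod xpoly s \<alpha> = (t' * hh (mk k)) mod xpoly s \<alpha>)" using i ii by blast
next
  assume h: "s * l = 2 * (\<Sum>j<l. degree (p j)) \<and>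
    (\<forall>k<l. \<exists>t t'. t \<noteq> 0 \<and> degree t < s \<and> t' \<noteq> 0 \<and> degree t' < s \<and>
       hh k mod xpoly s \<alpha> = (t * p (mk k)) mod xpoly s \<alpha> \<and>
       p k mod xpoly s \<alpha> = (t' * hh (mk k)) mod xpoly s \<alpha>)"
  show "\<forall>k<l. Pset s \<alpha> (p k) = Pset s \<alpha> (hh (mk k))"
  proof (intro allI impI)
    fix k assume k: "k < l"
    have mkk: "mk k < l" "mk (mk k) = k" using mk[OF k] by auto
    obtain t' where "p k mod xpoly s \<alpha> = (t' * hh (mk k)) mod xpoly s \<alpha>" using h k by blast
    then have a: "hh (mk k) dvd p k" using modeq_dvd hh_props[OF mkk(1)] by blast
    obtain t where "hh (mk k) mod xpoly s \<alpha> = (t * p (mk (mk k))) mod xpoly s \<alpha>" using h mkk(1) by blast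
    then have b: "p k dvd hh (mk k)" using modeq_dvd pk[OF k] mkk(2) by metis
    show "Pset s \<alpha> (p k) = Pset s \<alpha> (hh (mk k))" using dvd_Pset_eq[OF b a] .
  qed
qed

end



lemma int_invol: "0 < (L::int) \<Longrightarrow> 0 \<le> k \<Longrightarrow> k < L \<Longrightarrow> (L - c - (L - c - k) mod L) mod L = k"
proof -
  assume a: "0 < L" "0 \<le> k" "k < L"
  have "(L - c - (L - c - k) mod L) mod L = (L - c - (L - c - k)) mod L" by (rule mod_diff_right_eq)
  also have "L - c - (L - c - k) = k" by simp
  finally show ?thesis using a by simp
qed

lemma int_sum0: "(c + k + (L - c - k) mod L) mod (L::int) = 0"
proof -
  have "(c + k + (L - c - k) mod L) mod L = (c + k + (L - c - k)) mod L" by (rule mod_add_right_eq)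
  also have "c + k + (L - c - k) = L" by simp
  finally show ?thesis by simp
qed

theorem theorem4:
  fixes s l r :: nat and \<alpha> \<beta> \<omega> :: "'a::{finite,field}"
    and C :: "(nat \<Rightarrow> nat \<Rightarrow> 'a) set" and p :: "nat \<Rightarrow> 'a poly"
  assumes "0 < s" and "0 < l"
    and "\<alpha> \<in> {1, -1}" and "\<beta> \<in> {1, -1}"
    and "r = (LEAST n. 0 < n \<and> \<beta> ^ n = 1)"
    and "card (UNIV :: 'a set) mod (r * l) = 1 mod (r * l)"
    and "\<omega> ^ (r * l) = 1" and "\<forall>k. 0 < k \<and> k < r * l \<longrightarrow> \<omega> ^ k \<noteq> 1"
    and "\<omega> ^ l = \<beta>"
    and "R_ideal s l \<alpha> \<beta> C"
    and "\<forall>j<l. lead_coeff (p j) = 1 \<and> p j dvd xpoly s \<alpha> \<and>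
           Iset s l \<omega> r C j = {(g * p j) mod xpoly s \<alpha> | g. True}"
  shows "self_dual s l C \<longleftrightarrow>
    (s * l = 2 * (\<Sum>j<l. degree (p j)) \<and>
     (\<forall>k<l. \<exists>t t'. t \<noteq> 0 \<and> degree t < s \<and> t' \<noteq> 0 \<and> degree t' < s \<and>
        (let m = (if \<beta> = 1 then nat ((int l - 2 - int k) mod int l)
                  else nat ((int l - 1 - int k) mod int l))
         in reflect_poly (xpoly s \<alpha> div p k) mod xpoly s \<alpha> = (t * p m) mod xpoly s \<alpha>
          \<and> p k mod xpoly s \<alpha> = (t' * reflect_poly (xpoly s \<alpha> div p m)) mod xpoly s \<alpha>)))"
proof -
  note s = assms(1) and l = assms(2) and \<alpha> = assms(3) and \<beta> = assms(4) and rdef = assms(5)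
    and wrl = assms(7) and prim = assms(8) and wl = assms(9) and ideal = assms(10) and pkh = assms(11)
  define mk where "mk = (\<lambda>k. if \<beta> = 1 then nat ((int l - 2 - int k) mod int l)
                  else nat ((int l - 1 - int k) mod int l))"
  define th where "th = (\<lambda>k::nat. \<omega> ^ (1 + k * r))"
  have rcase: "(\<beta> = 1 \<and> r = 1) \<or> (\<beta> = -1 \<and> \<beta> \<noteq> 1 \<and> r = 2)"
  proof (cases "\<beta> = 1")
    case True
    have "r = 1" unfolding rdef by (rule Least_equality) (use True in auto)
    then show ?thesis using True by simp
  next
    case False
    then have b: "\<beta> = -1" using \<beta> by auto
    have "r = 2" unfolding rdef
    proof (rule Least_equality)
      show "0 < (2::nat) \<and> \<beta> ^ 2 = 1" using b by simp
    next
      fix y :: nat assume y: "0 < y \<and> \<beta> ^ y = 1"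
      show "2 \<le> y"
      proof (rule ccontr)
        assume "\<not> 2 \<le> y" then have "y = 1" using y by auto
        then show False using y False by simp
      qed
    qed
    then show ?thesis using b False by simp
  qed
  have rpos: "0 < r" using rcase by auto
  have wnz: "\<omega> \<noteq> 0"
  proof
    assume w0: "\<omega> = 0"
    have "0 < r * l" using rpos l by simp
    then have "\<omega> ^ (r * l) = 0" using w0 by (simp add: zero_power)
    then show False using wrl by simp
  qed
  have inj: "j = k" if j: "j < l" and k: "k < l" and e: "th j = th k" for j k
  proof (rule ccontr)
    assume ne: "j \<noteq> k"
    have key: "\<omega> ^ ((b - a) * r) = 1" if ab: "a < b" and eab: "th a = th b" for a b
    proof -
      obtain d where d: "b = a + d" using ab less_imp_add_positive by blast
      have "1 + b * r = (1 + a * r) + (b - a) * r" using d by (simp add: algebra_simps)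
      then have "th b = th a * \<omega> ^ ((b - a) * r)" unfolding th_def by (simp only: power_add)
      then show ?thesis using eab wnz unfolding th_def by simp
    qed
    show False
    proof (cases "j < k")
      case True
      have "\<omega> ^ ((k - j) * r) = 1" using key[OF True e] .
      moreover have "0 < (k - j) * r \<and> (k - j) * r < r * l" using True k rpos
        by (simp add: mult.commute)
      ultimately show False using prim by blast
    next
      case False
      then have "k < j" using ne by auto
      then have "\<omega> ^ ((j - k) * r) = 1" using key e by metis
      moreover have "0 < (j - k) * r \<and> (j - k) * r < r * l" using \<open>k < j\<close> j rpos
        by (simp add: mult.commute)
      ultimately show False using prim by blast
    qed
  qed
  have thl: "th k ^ l = \<beta>" for k
  proof -
    have "th k ^ l = \<omega> ^ ((1 + k * r) * l)" by (simp only: th_def power_mult)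
    also have "(1 + k * r) * l = l + (r * l) * k" by (simp add: algebra_simps)
    also have "\<omega> ^ (l + (r * l) * k) = \<omega> ^ l * (\<omega> ^ (r * l)) ^ k" by (simp only: power_add power_mult)
    finally have "th k ^ l = \<omega> ^ l * (\<omega> ^ (r * l)) ^ k" .
    then show ?thesis using wl wrl by simp
  qed
  have wmul: "\<omega> ^ (r * l * q) = 1" for q using wrl by (simp add: power_mult)
  have mkp: "mk k < l \<and> mk (mk k) = k \<and> th k * th (mk k) = 1" if k: "k < l" for k
  proof -
    have li: "0 < int l" using l by simp
    have ki: "0 \<le> int k" "int k < int l" using k by auto
    define c :: int where "c = (if \<beta> = 1 then 2 else 1)"
    have mkc: "mk j = nat ((int l - c - int j) mod int l)" for j
      unfolding mk_def c_def by simp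
    have mi: "int (mk j) = (int l - c - int j) mod int l" for j
      unfolding mkc using li by simp
    have lt: "mk k < l" using li mi[of k] by (metis of_nat_less_iff pos_mod_bound)
    have "int (mk (mk k)) = (int l - c - (int l - c - int k) mod int l) mod int l"
      unfolding mi ..
    also have "\<dots> = int k" by (rule int_invol[OF li ki])
    finally have mm: "mk (mk k) = k" by simp
    have c0: "0 \<le> c" by (simp add: c_def)
    have "int (nat c + k + mk k) = c + int k + (int l - c - int k) mod int l"
      using c0 mi[of k] by simp
    then have "int (nat c + k + mk k) mod int l = (c + int k + (int l - c - int k) mod int l) mod int l"
      by (rule arg_cong[where f="\<lambda>x. x mod int l"])
    also have "\<dots> = 0" by (rule int_sum0)
    finally have "int l dvd int (nat c + k + mk k)" by (simp add: mod_eq_0_iff_dvd)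
    then obtain q where q: "nat c + k + mk k = l * q" by (metis dvd_def of_nat_dvd_iff)
    have "th k * th (mk k) = \<omega> ^ (2 + (k + mk k) * r)" unfolding th_def
      by (simp add: power_add[symmetric] algebra_simps)
    also have "2 + (k + mk k) * r = r * l * q"
    proof (cases "\<beta> = 1")
      case True
      then have "r = 1" "nat c = 2" using rcase c_def by auto
      then show ?thesis using q by simp
    next
      case False
      then have "r = 2" "nat c = 1" using rcase c_def by auto
      then show ?thesis using q by (simp add: algebra_simps)
    qed
    also have "\<omega> ^ (r * l * q) = 1" by (rule wmul)
    finally show ?thesis using lt mm by simp
  qed
  interpret L: csetup s l \<alpha> \<beta> \<omega> r mk th C p
  proof (unfold_locales)
    show "0 < s" "0 < l" "\<alpha> \<in> {1, -1}" "\<beta> \<in> {1, -1}" by (fact s l \<alpha> \<beta>)+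
    show "\<And>k. th k = \<omega> ^ (1 + k * r)" by (simp add: th_def)
    show "\<And>j k. j < l \<Longrightarrow> k < l \<Longrightarrow> th j = th k \<Longrightarrow> j = k" by (rule inj)
    show "\<And>k. th k ^ l = \<beta>" by (rule thl)
    show "\<And>k. k < l \<Longrightarrow> mk k < l \<and> mk (mk k) = k \<and> th k * th (mk k) = 1" by (rule mkp)
    show "R_ideal s l \<alpha> \<beta> C" by (rule ideal)
    show "\<And>j. j < l \<Longrightarrow> lead_coeff (p j) = 1 \<and> p j dvd xpoly s \<alpha> \<and> Iset s l \<omega> r C j = Pset s \<alpha> (p j)"
      using pkh by (simp add: Pset_def)
  qed
  have "self_dual s l C \<longleftrightarrow>
   (s * l = 2 * (\<Sum>j<l. degree (p j)) \<and>
    (\<forall>k<l. \<exists>t t'. t \<noteq> 0 \<and> degree t < s \<and> t' \<noteq> 0 \<and> degree t' < s \<and>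
       L.hh k mod xpoly s \<alpha> = (t * p (mk k)) mod xpoly s \<alpha> \<and>
       p k mod xpoly s \<alpha> = (t' * L.hh (mk k)) mod xpoly s \<alpha>))"
    using L.sd_iff L.final by simp
  then show ?thesis by (simp only: L.hh_def Let_def mk_def)
qed

end
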